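(* Let $\chi$ be a kernel as described in the context, and suppose in addition that its first-order algebraic moment vanishes identically: $m_1(\chi,u)=0$ for all $u\in\mathbb{R}^+$. Let $f\in C^{(2)}(\mathbb{R}^+)$. Then for every $x\in\mathbb{R}^+$, $$\lim_{w\to+\infty} w\big[(I_w^{\chi}f)(x)-f(x)\big]=\frac{(\theta f)(x)}{2}.$$
   Context: A kernel is a continuous function $\chi:\mathbb{R}^+\to\mathbb{R}$ satisfying: (i) $\sum_{k=-\infty}^{+\infty}\chi(e^{-k}u)=1$ for every $u\in\mathbb{R}^+$; (ii) $M_2(\chi)<+\infty$ and $\lim_{\gamma\to+\infty}\sum_{|k-\log u|>\gamma}|\chi(e^{-k}u)|\,|k-\log u|^2=0$ uniformly with respect to $u\in\mathbb{R}^+$. Algebraic moments: $m_\nu(\chi,u)=\sum_{k\in\mathbb{Z}}\chi(e^{-k}u)(k-\log u)^\nu$; absolute moments: $M_\nu(\chi,u)=\sum_{k\in\mathbb{Z}}|\chi(e^{-k}u)|\,|k-\log u|^\nu$, $M_\nu(\chi)=\sup_{u>0}M_\nu(\chi,u)$. For $w>0$, $x\in\mathbb{R}^+$: $(I_w^{\chi}f)(x)=\sum_{k\in\mathbb{Z}}\chi(e^{-k}x^w)\,w\int_{k/w}^{(k+1)/w}f(e^u)\,du$. Mellin differential operator: $(\theta f)(x)=xf'(x)$, and $\theta^1=\theta$, $\theta^r=\theta(\theta^{r-1})$. $C(\mathbb{R}^+)$ denotes the bounded continuous functions on $\mathbb{R}^+$, and $C^{(n)}(\mathbb{R}^+)$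 denotes the functions $f\in C(\mathbb{R}^+)$ such that $\theta^j f$ exists and belongs to $C(\mathbb{R}^+)$ for $j=1,\dots,n$. *)

theory Defs
  imports "HOL-Analysis.Analysis"
begin

definition abs_moment_term :: "(real \<Rightarrow> real) \<Rightarrow> nat \<Rightarrow> real \<Rightarrow> int \<Rightarrow> real" where
  "abs_moment_term K nu u k = abs (K (exp (- real_of_int k) * u)) * abs (real_of_int k - ln u) ^ nu"

definition alg_moment :: "(real \<Rightarrow> real) \<Rightarrow> nat \<Rightarrow> real \<Rightarrow> real" where
  "alg_moment K nu u = (\<Sum>\<^sub>\<infinity>k\<in>(UNIV::int set). K (exp (- real_of_int k) * u) * (real_of_int k - ln u) ^ nu)"

definition abs_moment :: "(real \<Rightarrow> real) \<Rightarrow> nat \<Rightarrow> real \<Rightarrow> real" where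
  "abs_moment K nu u = (\<Sum>\<^sub>\<infinity>k\<in>(UNIV::int set). abs_moment_term K nu u k)"

text \<open>Kernel: continuous on R^+, partition of unity (i), and condition (ii):
  M_2(chi) = sup_{u>0} M_2(chi,u) finite (the series converge and are uniformly bounded),
  and the tails of the second absolute moment tend to 0 uniformly in u.\<close>
definition mellin_kernel :: "(real \<Rightarrow> real) \<Rightarrow> bool" where
  "mellin_kernel K \<longleftrightarrow>
     continuous_on {0<..} K \<and>
     (\<forall>u>0. ((\<lambda>k::int. K (exp (- real_of_int k) * u)) has_sum 1) UNIV) \<and>
     (\<forall>u>0. abs_moment_term K 2 u summable_on UNIV) \<and>
     (\<exists>B. \<forall>u>0. abs_moment K 2 u \<le> B) \<and>
     (\<forall>\<epsilon>>0. \<exists>\<Gamma>. \<forall>\<gamma>\<ge>\<Gamma>. \<forall>u>0.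
        (\<Sum>\<^sub>\<infinity>k\<in>{k::int. \<bar>real_of_int k - ln u\<bar> > \<gamma>}. abs_moment_term K 2 u k) < \<epsilon>)"

definition kantorovich_op :: "(real \<Rightarrow> real) \<Rightarrow> real \<Rightarrow> (real \<Rightarrow> real) \<Rightarrow> real \<Rightarrow> real" where
  "kantorovich_op K w f x =
     (\<Sum>\<^sub>\<infinity>k\<in>(UNIV::int set). K (exp (- real_of_int k) * x powr w) *
        (w * integral {real_of_int k / w .. (real_of_int k + 1) / w} (\<lambda>u. f (exp u))))"

definition mellin_theta :: "(real \<Rightarrow> real) \<Rightarrow> real \<Rightarrow> real" where
  "mellin_theta f = (\<lambda>x. x * deriv f x)"

definition bcont_pos :: "(real \<Rightarrow> real) \<Rightarrow> bool" where
  "bcont_pos f \<longleftrightarrow> continuous_on {0<..} f \<and> bounded (f ` {0<..})"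

text \<open>C^(n)(R^+): theta^j f exists (i.e. theta^(j-1) f is differentiable on R^+)
  and is bounded continuous on R^+, for j = 0..n.\<close>
definition Cn_mellin :: "nat \<Rightarrow> (real \<Rightarrow> real) \<Rightarrow> bool" where
  "Cn_mellin n f \<longleftrightarrow>
     (\<forall>j\<le>n. bcont_pos ((mellin_theta ^^ j) f)) \<and>
     (\<forall>j<n. \<forall>x>0. (mellin_theta ^^ j) f differentiable (at x))"

end

theory Submission imports Defs begin

lemma dom_summable:
  fixes f h :: "'a \<Rightarrow> real"
  assumes "h summable_on A" "\<And>k. k \<in> A \<Longrightarrow> \<bar>f k\<bar> \<le> h k"
  shows "f summable_on A" "\<bar>infsum f A\<bar> \<le> infsum h A"
proof -
  have a: "(\<lambda>k. norm (f k)) summable_on A"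
    by (rule summable_on_comparison_test[OF assms(1)]) (use assms(2) in auto)
  then show s: "f summable_on A" using summable_on_iff_abs_summable_on_real by blast
  show "\<bar>infsum f A\<bar> \<le> infsum h A"
    using norm_infsum_le[OF has_sum_infsum[OF s] has_sum_infsum[OF assms(1)]] assms(2) by auto
qed

lemma taylor_bound:
  fixes g g1 g2 :: "real \<Rightarrow> real"
  assumes d1: "\<And>s. (g has_real_derivative g1 s) (at s)"
    and d2: "\<And>s. (g1 has_real_derivative g2 s) (at s)"
    and b: "\<And>s. \<bar>g2 s\<bar> \<le> C"
  shows "\<bar>g u - g t - g1 t * (u - t)\<bar> \<le> C / 2 * (u - t)^2"
proof (cases "u = t")
  case True then show ?thesis by simp
next
  case False
  define diff where "diff = (\<lambda>m::nat. if m = 0 then g else if m = 1 then g1 else g2)"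
  have "\<exists>\<xi>. (if u < t then u < \<xi> \<and> \<xi> < t else t < \<xi> \<and> \<xi> < u) \<and>
    g u = (\<Sum>m<2. (diff m t / fact m) * (u - t)^m) + (diff 2 \<xi> / fact 2) * (u - t)^2"
    by (rule Taylor[of 2 diff g "min u t" "max u t"]) (use False d1 d2 in \<open>auto simp: diff_def less_2_cases_iff\<close>)
  then obtain \<xi> where "g u = g t + g1 t * (u - t) + g2 \<xi> / 2 * (u - t)^2"
    by (auto simp: diff_def numeral_2_eq_2)
  then have "\<bar>g u - g t - g1 t * (u - t)\<bar> = \<bar>g2 \<xi>\<bar> / 2 * (u - t)^2"
    by (simp add: abs_mult)
  also have "\<dots> \<le> C / 2 * (u - t)^2"
    using b[of \<xi>] by (intro mult_right_mono) auto
  finally show ?thesis .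
qed

lemma integ_est:
  fixes g :: "real \<Rightarrow> real"
  assumes cont: "continuous_on UNIV g"
    and tb: "\<And>u. \<bar>g u - g t - g1t * (u - t)\<bar> \<le> C * (u - t)^2"
    and C: "C \<ge> 0" and w: "w > 0"
  shows "\<bar>w * integral {a..a + 1/w} g - (g t + g1t * ((a - t) + 1 / (2 * w)))\<bar>
         \<le> C * (\<bar>a - t\<bar> + 1 / w)^2"
proof -
  define b where "b = a + 1/w"
  have ab: "a \<le> b" using w by (simp add: b_def)
  define G where "G = (\<lambda>u. g t * u + g1t * (u - t)^2 / 2)"
  have lin: "((\<lambda>u. g t + g1t * (u - t)) has_integral (G b - G a)) {a..b}"
    unfolding G_def
    by (rule fundamental_theorem_of_calculus[OF ab])
       (auto intro!: derivative_eq_intros simp: has_real_derivative_iff_has_vector_derivative[symmetric])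
  have ig: "g integrable_on {a..b}"
    using cont by (intro integrable_continuous_real) (auto intro: continuous_on_subset)
  define R where "R = (\<lambda>u. g u - (g t + g1t * (u - t)))"
  have iR: "integral {a..b} R = integral {a..b} g - (G b - G a)"
    unfolding R_def using integral_diff[OF ig has_integral_integrable[OF lin]] integral_unique[OF lin] by simp
  have Rb: "\<bar>integral {a..b} R\<bar> \<le> C * (\<bar>a - t\<bar> + 1 / w)^2 * (b - a)"
  proof -
    have "norm (integral {a..b} R) \<le> C * (\<bar>a - t\<bar> + 1 / w)^2 * (b - a)"
    proof (rule integral_bound[OF ab])
      show "continuous_on {a..b} R" unfolding R_def
        by (intro continuous_intros continuous_on_subset[OF cont]) auto
      fix u assume u: "u \<in> {a..b}"
      have "\<bar>u - t\<bar> \<le> \<bar>a - t\<bar> + 1 / w" using u by (auto simp: b_def)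
      then have "(u - t)^2 \<le> (\<bar>a - t\<bar> + 1 / w)^2"
        by (metis abs_ge_zero power2_abs power_mono)
      then show "norm (R u) \<le> C * (\<bar>a - t\<bar> + 1 / w)^2"
        using tb[of u] C unfolding R_def by (smt (verit) mult_left_mono real_norm_def)
    qed
    then show ?thesis by simp
  qed
  have eq: "w * (G b - G a) = g t + g1t * ((a - t) + 1 / (2 * w))"
    unfolding G_def b_def using w by (simp add: field_simps power2_eq_square)
  have "w * integral {a..b} g - (g t + g1t * ((a - t) + 1 / (2 * w))) = w * integral {a..b} R"
  proof -
    have "integral {a..b} g = integral {a..b} R + (G b - G a)" using iR by simp
    then have "w * integral {a..b} g = w * integral {a..b} R + w * (G b - G a)"
      by (simp add: distrib_left)
    then show ?thesis using eq by simp
  qed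
  also have "\<bar>\<dots>\<bar> \<le> w * (C * (\<bar>a - t\<bar> + 1 / w)^2 * (b - a))"
    using Rb w by (simp add: abs_mult)
  also have "\<dots> = C * (\<bar>a - t\<bar> + 1 / w)^2" using w by (simp add: b_def)
  finally show ?thesis by (simp add: b_def)
qed


lemma kernel_bound:
  assumes "mellin_kernel K"
  shows "\<exists>B. \<forall>u>0. (\<lambda>k::int. \<bar>K (exp (- real_of_int k) * u)\<bar> * (\<bar>real_of_int k - ln u\<bar> + 1)^2) summable_on UNIV
     \<and> (\<Sum>\<^sub>\<infinity>k\<in>UNIV. \<bar>K (exp (- real_of_int k) * u)\<bar> * (\<bar>real_of_int k - ln u\<bar> + 1)^2) \<le> B"
proof -
  from assms obtain B2 where B2: "\<And>u. u > 0 \<Longrightarrow> abs_moment K 2 u \<le> B2"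
    and cont: "continuous_on {0<..} K"
    and summ: "\<And>u. u > 0 \<Longrightarrow> abs_moment_term K 2 u summable_on UNIV"
    unfolding mellin_kernel_def by blast
  have "compact (K ` {exp (-1)..exp 1})"
  proof (rule compact_continuous_image)
    show "continuous_on {exp (-1)..exp 1} K"
      by (rule continuous_on_subset[OF cont]) (auto simp: less_le_trans[OF exp_gt_zero])
  qed simp
  then obtain M where M: "\<And>y. y \<in> {exp (-1)..exp 1} \<Longrightarrow> \<bar>K y\<bar> \<le> M"
    using compact_imp_bounded bounded_real by (metis image_eqI)
  define M' where "M' = max M 0"
  have M': "\<And>y. y \<in> {exp (-1)..exp 1} \<Longrightarrow> \<bar>K y\<bar> \<le> M'" "M' \<ge> 0"
    using M by (auto simp: M'_def intro: le_max_iff_disj[THEN iffD2])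
  show ?thesis
  proof (intro exI allI impI conjI)
    fix u :: real assume u: "u > 0"
    define F where "F = {\<lfloor>ln u\<rfloor>, \<lfloor>ln u\<rfloor> + 1}"
    define h where "h = (\<lambda>k. 4 * abs_moment_term K 2 u k + (if k \<in> F then 4 * M' else 0))"
    have sif: "(\<lambda>k. if k \<in> F then 4 * M' else 0) summable_on UNIV"
      by (subst summable_on_cong_neutral[where T = F and g = "\<lambda>_. 4 * M'"]) (auto simp: F_def)
    have iif: "(\<Sum>\<^sub>\<infinity>k\<in>UNIV. if k \<in> F then 4 * M' else 0) = 8 * M'"
      by (subst infsum_cong_neutral[where T = F and g = "\<lambda>_. 4 * M'"]) (auto simp: F_def)
    have sh: "h summable_on UNIV" unfolding h_def
      by (intro summable_on_add summable_on_cmult_right summ u sif)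
    have ih: "infsum h UNIV \<le> 4 * B2 + 8 * M'"
      unfolding h_def
      using infsum_add[OF summable_on_cmult_right[OF summ[OF u]] sif] iif B2[OF u]
        infsum_cmult_right[OF summ[OF u], of 4]
      by (simp add: abs_moment_def)
    have pt: "\<bar>\<bar>K (exp (- real_of_int k) * u)\<bar> * (\<bar>real_of_int k - ln u\<bar> + 1)^2\<bar> \<le> h k" for k
    proof -
      define d where "d = real_of_int k - ln u"
      have amt0: "abs_moment_term K 2 u k \<ge> 0" by (simp add: abs_moment_term_def)
      show ?thesis
      proof (cases "\<bar>d\<bar> \<ge> 1")
        case True
        have "(\<bar>d\<bar> + 1)^2 \<le> (2 * \<bar>d\<bar>)^2" using True by (intro power_mono) auto
        then have "(\<bar>d\<bar> + 1)^2 \<le> 4 * \<bar>d\<bar>^2" by (simp add: power_mult_distrib)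
        then have "\<bar>K (exp (- real_of_int k) * u)\<bar> * (\<bar>d\<bar> + 1)^2 \<le> 4 * abs_moment_term K 2 u k"
          unfolding abs_moment_term_def d_def[symmetric]
          by (metis (no_types, lifting) abs_ge_zero mult.left_commute mult_left_mono)
        then show ?thesis using M'(2) by (simp add: h_def d_def)
      next
        case False
        have e: "exp (- real_of_int k) * u = exp (ln u - real_of_int k)"
          using u by (simp add: exp_diff exp_minus field_simps)
        have "exp (- real_of_int k) * u \<in> {exp (-1)..exp 1}"
          unfolding e using False by (auto simp: d_def)
        then have Kb: "\<bar>K (exp (- real_of_int k) * u)\<bar> \<le> M'" by (rule M')
        have "(\<bar>d\<bar> + 1)^2 \<le> 2^2" using False by (intro power_mono) auto
        then have "(\<bar>d\<bar> + 1)^2 \<le> 4" by simp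
        then have "\<bar>K (exp (- real_of_int k) * u)\<bar> * (\<bar>d\<bar> + 1)^2 \<le> M' * 4"
          using Kb by (intro mult_mono) auto
        moreover have "k \<in> F"
        proof -
          have "real_of_int k > ln u - 1" "real_of_int k < ln u + 1" using False by (auto simp: d_def)
          moreover have "real_of_int \<lfloor>ln u\<rfloor> \<le> ln u" "ln u < real_of_int \<lfloor>ln u\<rfloor> + 1" by linarith+
          ultimately have "k \<ge> \<lfloor>ln u\<rfloor>" "k \<le> \<lfloor>ln u\<rfloor> + 1" by linarith+
          then show ?thesis by (auto simp: F_def)
        qed
        ultimately show ?thesis using amt0 by (simp add: h_def d_def)
      qed
    qed
    show "(\<lambda>k::int. \<bar>K (exp (- real_of_int k) * u)\<bar> * (\<bar>real_of_int k - ln u\<bar> + 1)^2) summable_on UNIV"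
      using dom_summable(1)[OF sh pt] .
    show "(\<Sum>\<^sub>\<infinity>k\<in>UNIV. \<bar>K (exp (- real_of_int k) * u)\<bar> * (\<bar>real_of_int k - ln u\<bar> + 1)^2) \<le> 4 * B2 + 8 * M'"
      using dom_summable(2)[OF sh pt] ih by linarith
  qed
qed


theorem theorem2:
  fixes K f :: "real \<Rightarrow> real" and x :: real
  assumes "mellin_kernel K"
    and "\<forall>u>0. alg_moment K 1 u = 0"
    and "Cn_mellin 2 f"
    and "x > 0"
  shows "((\<lambda>w. w * (kantorovich_op K w f x - f x)) \<longlongrightarrow> mellin_theta f x / 2) at_top"
proof -
  note ker = assms(1) and m1 = assms(2) and x = assms(4)
  have bc2: "bcont_pos ((mellin_theta ^^ 2) f)" and df: "\<And>y. y > 0 \<Longrightarrow> f differentiable (at y)"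
    and dtf: "\<And>y. y > 0 \<Longrightarrow> mellin_theta f differentiable (at y)"
  proof -
    have c: "\<forall>j\<le>2. bcont_pos ((mellin_theta ^^ j) f)" "\<forall>j<2. \<forall>x>0. (mellin_theta ^^ j) f differentiable (at x)"
      using assms(3) unfolding Cn_mellin_def by auto
    show "bcont_pos ((mellin_theta ^^ 2) f)" using c(1) by simp
    show "\<And>y. y > 0 \<Longrightarrow> f differentiable (at y)" using c(2)[rule_format, of 0] by simp
    show "\<And>y. y > 0 \<Longrightarrow> mellin_theta f differentiable (at y)" using c(2)[rule_format, of 1] by simp
  qed
  have tt: "(mellin_theta ^^ 2) f = mellin_theta (mellin_theta f)" by (simp add: numeral_2_eq_2)
  obtain C2 where C2: "\<And>y. y > 0 \<Longrightarrow> \<bar>mellin_theta (mellin_theta f) y\<bar> \<le> C2"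
    using bc2 unfolding bcont_pos_def bounded_real tt by auto
  have C20: "C2 \<ge> 0" using C2[of 1] by simp
  define g where "g = (\<lambda>s. f (exp s))"
  define g1 where "g1 = (\<lambda>s. mellin_theta f (exp s))"
  define g2 where "g2 = (\<lambda>s. mellin_theta (mellin_theta f) (exp s))"
  have d1: "(g has_real_derivative g1 s) (at s)" for s
  proof -
    have "DERIV f (exp s) :> deriv f (exp s)" using df[of "exp s"] DERIV_deriv_iff_real_differentiable by simp
    from DERIV_chain2[OF this DERIV_exp] show ?thesis
      by (simp add: g_def g1_def mellin_theta_def mult.commute)
  qed
  have d2: "(g1 has_real_derivative g2 s) (at s)" for s
  proof -
    have "DERIV (mellin_theta f) (exp s) :> deriv (mellin_theta f) (exp s)"
      using dtf[of "exp s"] DERIV_deriv_iff_real_differentiable by simp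
    from DERIV_chain2[OF this DERIV_exp] show ?thesis
      by (simp add: g1_def g2_def mellin_theta_def[of "mellin_theta f"] mult.commute)
  qed
  have tb: "\<bar>g u - g t - g1 t * (u - t)\<bar> \<le> C2 / 2 * (u - t)^2" for u t
    by (rule taylor_bound[OF d1 d2]) (simp add: g2_def C2)
  have gc: "continuous_on UNIV g"
    using d1 by (intro continuous_at_imp_continuous_on) (auto intro: DERIV_isCont)
  obtain B where B: "\<And>u. u > 0 \<Longrightarrow> (\<lambda>k::int. \<bar>K (exp (- real_of_int k) * u)\<bar> * (\<bar>real_of_int k - ln u\<bar> + 1)^2) summable_on UNIV"
    "\<And>u. u > 0 \<Longrightarrow> (\<Sum>\<^sub>\<infinity>k\<in>UNIV. \<bar>K (exp (- real_of_int k) * u)\<bar> * (\<bar>real_of_int k - ln u\<bar> + 1)^2) \<le> B"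
    using kernel_bound[OF ker] by blast
  define t where "t = ln x"
  have gt: "g t = f x" "g1 t = mellin_theta f x" using x by (simp_all add: g_def g1_def t_def)
  have main: "\<bar>w * (kantorovich_op K w f x - f x) - mellin_theta f x / 2\<bar> \<le> C2 / 2 * B / w"
    if w: "w > 0" for w
  proof -
    define u where "u = x powr w"
    have u: "u > 0" using x by (simp add: u_def)
    have lnu: "ln u = w * t" using x by (simp add: u_def t_def)
    define c where "c = (\<lambda>k::int. K (exp (- real_of_int k) * u))"
    define d where "d = (\<lambda>k::int. real_of_int k - w * t)"
    define A where "A = (\<lambda>k::int. w * integral {real_of_int k / w .. (real_of_int k + 1) / w} g)"
    define E where "E = (\<lambda>k. A k - (g t + g1 t * ((d k + 1/2) / w)))"
    define Q where "Q = (\<lambda>k. \<bar>c k\<bar> * (\<bar>d k\<bar> + 1)^2)"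
    have sQ: "Q summable_on UNIV" and iQ: "infsum Q UNIV \<le> B"
      using B[OF u] by (simp_all add: Q_def c_def d_def lnu)
    have Q0: "\<bar>c k\<bar> \<le> Q k" for k
    proof -
      have "1 \<le> (\<bar>d k\<bar> + 1)^2" by (simp add: one_le_power)
      then show ?thesis unfolding Q_def by (metis abs_ge_zero mult.right_neutral mult_left_mono)
    qed
    have Q1: "\<bar>c k * d k\<bar> \<le> Q k" for k
    proof -
      have e: "(\<bar>d k\<bar> + 1)^2 = \<bar>d k\<bar> * \<bar>d k\<bar> + 2 * \<bar>d k\<bar> + 1" by (simp add: power2_eq_square algebra_simps)
      have "\<bar>d k\<bar> * \<bar>d k\<bar> \<ge> 0" by simp
      then have "\<bar>d k\<bar> \<le> (\<bar>d k\<bar> + 1)^2" unfolding e by linarith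
      then show ?thesis unfolding Q_def abs_mult by (intro mult_left_mono) auto
    qed
    have Ek: "\<bar>E k\<bar> \<le> C2 / (2 * w^2) * (\<bar>d k\<bar> + 1)^2" for k
    proof -
      have "\<bar>w * integral {real_of_int k / w .. real_of_int k / w + 1/w} g
              - (g t + g1 t * ((real_of_int k / w - t) + 1 / (2 * w)))\<bar>
            \<le> C2 / 2 * (\<bar>real_of_int k / w - t\<bar> + 1 / w)^2"
        by (rule integ_est[OF gc tb]) (use C20 w in auto)
      moreover have "(real_of_int k + 1) / w = real_of_int k / w + 1/w" by (simp add: add_divide_distrib)
      moreover have "(real_of_int k / w - t) + 1 / (2 * w) = (d k + 1/2) / w"
        using w by (simp add: d_def field_simps)
      moreover have "\<bar>real_of_int k / w - t\<bar> + 1 / w = (\<bar>d k\<bar> + 1) / w"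
      proof -
        have "real_of_int k / w - t = d k / w" using w by (simp add: d_def field_simps)
        then show ?thesis using w by (simp add: add_divide_distrib)
      qed
      ultimately have "\<bar>E k\<bar> \<le> C2 / 2 * ((\<bar>d k\<bar> + 1) / w)^2"
        unfolding E_def A_def by simp
      also have "\<dots> = C2 / (2 * w^2) * (\<bar>d k\<bar> + 1)^2" by (simp add: power_divide)
      finally show ?thesis .
    qed
    have Q4: "\<bar>c k * E k\<bar> \<le> C2 / (2 * w^2) * Q k" for k
    proof -
      have "\<bar>c k * E k\<bar> \<le> \<bar>c k\<bar> * (C2 / (2 * w^2) * (\<bar>d k\<bar> + 1)^2)"
        unfolding abs_mult by (intro mult_left_mono Ek) auto
      then show ?thesis by (simp add: Q_def algebra_simps)
    qed
    have sc: "c summable_on UNIV" using dom_summable(1)[OF sQ Q0] .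
    have scd: "(\<lambda>k. c k * d k) summable_on UNIV" using dom_summable(1)[OF sQ Q1] .
    have sQ': "(\<lambda>k. C2 / (2 * w^2) * Q k) summable_on UNIV" by (intro summable_on_cmult_right sQ)
    have scE: "(\<lambda>k. c k * E k) summable_on UNIV" using dom_summable(1)[OF sQ' Q4] .
    have bE: "\<bar>infsum (\<lambda>k. c k * E k) UNIV\<bar> \<le> C2 / (2 * w^2) * B"
    proof -
      have "\<bar>infsum (\<lambda>k. c k * E k) UNIV\<bar> \<le> infsum (\<lambda>k. C2 / (2 * w^2) * Q k) UNIV"
        using dom_summable(2)[OF sQ' Q4] .
      also have "\<dots> = C2 / (2 * w^2) * infsum Q UNIV" by (intro infsum_cmult_right sQ)
      also have "\<dots> \<le> C2 / (2 * w^2) * B" using iQ C20 by (intro mult_left_mono) auto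
      finally show ?thesis .
    qed
    have ic: "infsum c UNIV = 1"
      using ker u unfolding mellin_kernel_def c_def by (auto intro: infsumI)
    have icd: "infsum (\<lambda>k. c k * d k) UNIV = 0"
      using m1[rule_format, OF u] unfolding alg_moment_def c_def d_def lnu[symmetric] by simp
    have decomp: "c k * A k = (g t * c k + g1 t / w * (c k * d k)) + g1 t / (2 * w) * c k + c k * E k" for k
    proof -
      have "(d k + 1/2) / w = d k / w + 1 / (2 * w)" using w by (simp add: field_simps)
      then show ?thesis unfolding E_def by (simp add: algebra_simps)
    qed
    have "kantorovich_op K w f x = infsum (\<lambda>k. c k * A k) UNIV"
      unfolding kantorovich_op_def c_def A_def u_def g_def by simp
    also have "\<dots> = (g t * infsum c UNIV + g1 t / w * infsum (\<lambda>k. c k * d k) UNIV)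
        + g1 t / (2 * w) * infsum c UNIV + infsum (\<lambda>k. c k * E k) UNIV"
      unfolding decomp
      by (subst infsum_add, (intro summable_on_add summable_on_cmult_right sc scd scE)+,
          subst infsum_add, (intro summable_on_add summable_on_cmult_right sc scd scE)+,
          subst infsum_add, (intro summable_on_add summable_on_cmult_right sc scd scE)+,
          simp only: infsum_cmult_right[OF sc] infsum_cmult_right[OF scd])
    also have "\<dots> = f x + mellin_theta f x / (2 * w) + infsum (\<lambda>k. c k * E k) UNIV"
      using ic icd gt by simp
    finally have "w * (kantorovich_op K w f x - f x) - mellin_theta f x / 2
        = w * infsum (\<lambda>k. c k * E k) UNIV" using w by (simp add: field_simps)
    also have "\<bar>\<dots>\<bar> \<le> w * (C2 / (2 * w^2) * B)" using mult_left_mono[OF bE, of w] w by (simp add: abs_mult)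
    also have "\<dots> = C2 / 2 * B / w" using w by (simp add: power2_eq_square field_simps)
    finally show ?thesis .
  qed
  have lim0: "((\<lambda>w. C2 / 2 * B / w) \<longlongrightarrow> 0) at_top"
    by (intro tendsto_divide_0[OF tendsto_const] filterlim_at_top_imp_at_infinity filterlim_ident)
  have "((\<lambda>w. w * (kantorovich_op K w f x - f x) - mellin_theta f x / 2) \<longlongrightarrow> 0) at_top"
    by (rule Lim_null_comparison[OF _ lim0])
       (use main in \<open>auto intro: eventually_at_top_linorderI[of 1]\<close>)
  then show ?thesis by (rule LIM_zero_cancel)
qed

end
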